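(* Let $P=(p_1,\dots,p_n)$ be points in $\mathbb{R}^d$, $\mathcal{F}$ a constraint for $k$-CMeans, and $\mathcal{C}=\{c_1,\dots,c_k\}\subset\mathbb{R}^d$ with $\omega=\frac1n\sum_{i=1}^n\min_{c\in\mathcal{C}}\|p_i-c\|^2$. For each $i$ let $\tilde p_i$ be a point of $\mathcal{C}$ nearest to $p_i$, and let $\tilde P=(\tilde p_1,\dots,\tilde p_n)$. Let $\delta^2_{opt}$ and $\tilde\delta^2_{opt}$ be the optimal $k$-CMeans values of $P$ and $\tilde P$ (with the same $\mathcal{F}$), and let $\delta^2_{opt}([\mathcal{C}]^k)=\min_{(S_j)\in\mathcal{F}}\min_{(q_1,\dots,q_k)\in\mathcal{C}^k}\frac1n\sum_j\sum_{i\in S_j}\|p_i-q_j\|^2$. Then $\tilde\delta^2_{opt}\le 2\omega+2\delta^2_{opt}$ and $\delta^2_{opt}([\mathcal{C}]^k)\le 2\omega+8\tilde\delta^2_{opt}$.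
   Context: A constraint for $k$-CMeans is a nonempty family $\mathcal{F}$ of ordered partitions $(S_1,\dots,S_k)$ of $\{1,\dots,n\}$ into $k$ parts. For a sequence $X=(x_1,\dots,x_n)$ its optimal $k$-CMeans value is $\min_{(S_j)\in\mathcal{F}}\min_{c'_1,\dots,c'_k\in\mathbb{R}^d}\frac1n\sum_j\sum_{i\in S_j}\|x_i-c'_j\|^2$. *)

theory Defs
  imports "HOL-Analysis.Analysis"
begin

definition ordered_partition :: "nat \<Rightarrow> nat \<Rightarrow> (nat \<Rightarrow> nat set) \<Rightarrow> bool" where
  "ordered_partition n k S \<longleftrightarrow>
     (\<Union>j\<in>{1..k}. S j) = {1..n} \<and>
     (\<forall>j\<in>{1..k}. \<forall>j'\<in>{1..k}. j \<noteq> j' \<longrightarrow> S j \<inter> S j' = {}) \<and>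
     (\<forall>j. j \<notin> {1..k} \<longrightarrow> S j = {})"

definition cmeans_constraint :: "nat \<Rightarrow> nat \<Rightarrow> (nat \<Rightarrow> nat set) set \<Rightarrow> bool" where
  "cmeans_constraint n k F \<longleftrightarrow> F \<noteq> {} \<and> (\<forall>S\<in>F. ordered_partition n k S)"

definition cmeans_cost :: "nat \<Rightarrow> nat \<Rightarrow> (nat \<Rightarrow> 'a::euclidean_space) \<Rightarrow> (nat \<Rightarrow> nat set) \<Rightarrow> (nat \<Rightarrow> 'a) \<Rightarrow> real" where
  "cmeans_cost n k X S c = (1 / real n) * (\<Sum>j=1..k. \<Sum>i\<in>S j. (norm (X i - c j))\<^sup>2)"

definition opt_cmeans :: "nat \<Rightarrow> nat \<Rightarrow> (nat \<Rightarrow> nat set) set \<Rightarrow> (nat \<Rightarrow> 'a::euclidean_space) \<Rightarrow> real" where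
  "opt_cmeans n k F X = (INF S\<in>F. INF c. cmeans_cost n k X S c)"

definition opt_cmeans_in :: "nat \<Rightarrow> nat \<Rightarrow> (nat \<Rightarrow> nat set) set \<Rightarrow> (nat \<Rightarrow> 'a::euclidean_space) \<Rightarrow> 'a set \<Rightarrow> real" where
  "opt_cmeans_in n k F X C = (INF S\<in>F. INF q\<in>{q. \<forall>j\<in>{1..k}. q j \<in> C}. cmeans_cost n k X S q)"

end

theory Submission
  imports Defs
begin

lemma part_sum:
  assumes "ordered_partition n k S"
  shows "(\<Sum>j=1..k. \<Sum>i\<in>S j. f i) = (\<Sum>i=1..n. (f i::real))"
proof -
  have U: "(\<Union>j\<in>{1..k}. S j) = {1..n}" and D: "\<forall>j\<in>{1..k}. \<forall>j'\<in>{1..k}. j \<noteq> j' \<longrightarrow> S j \<inter> S j' = {}"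
    using assms unfolding ordered_partition_def by auto
  have fin: "\<forall>j\<in>{1..k}. finite (S j)"
  proof
    fix j assume "j \<in> {1..k}"
    then have "S j \<subseteq> {1..n}" using U by blast
    then show "finite (S j)" using finite_subset by blast
  qed
  have "sum f (\<Union>j\<in>{1..k}. S j) = (\<Sum>j=1..k. sum f (S j))"
    by (rule sum.UNION_disjoint) (use fin D in auto)
  then show ?thesis using U by simp
qed

lemma sq_tri:
  fixes x y z :: "'a::euclidean_space"
  shows "norm (x - z)^2 \<le> 2 * norm (x - y)^2 + 2 * norm (y - z)^2"
proof -
  have "norm (x - z) \<le> norm (x - y) + norm (y - z)" using norm_triangle_ineq[of "x - y" "y - z"] by simp
  then have "norm (x - z)^2 \<le> (norm (x - y) + norm (y - z))^2"
    by (rule power_mono) simp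
  also have "\<dots> \<le> 2 * norm (x - y)^2 + 2 * norm (y - z)^2"
    using zero_le_power2[of "norm (x - y) - norm (y - z)"] by (simp add: power2_eq_square algebra_simps)
  finally show ?thesis .
qed

lemma sq_tri2:
  fixes p q t d :: "'a::euclidean_space"
  assumes "norm (d - q) \<le> norm (d - t)"
  shows "norm (p - q)^2 \<le> 2 * norm (p - t)^2 + 8 * norm (t - d)^2"
proof -
  have "norm (p - q) \<le> norm (p - t) + norm (t - d) + norm (d - q)"
    using norm_triangle_ineq[of "p - t" "t - d"] norm_triangle_ineq[of "p - d" "d - q"] by simp
  also have "norm (d - q) \<le> norm (t - d)" using assms by (simp add: norm_minus_commute)
  finally have "norm (p - q) \<le> norm (p - t) + 2 * norm (t - d)" by simp
  then have "norm (p - q)^2 \<le> (norm (p - t) + 2 * norm (t - d))^2"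
    by (rule power_mono) simp
  also have "\<dots> \<le> 2 * norm (p - t)^2 + 8 * norm (t - d)^2"
    using zero_le_power2[of "norm (p - t) - 2 * norm (t - d)"] by (simp add: power2_eq_square algebra_simps)
  finally show ?thesis .
qed

theorem lemma8:
  fixes P Pt :: "nat \<Rightarrow> 'a::euclidean_space"
    and c :: "nat \<Rightarrow> 'a"
    and n k :: nat
    and F :: "(nat \<Rightarrow> nat set) set"
    and \<omega> :: real
  assumes "n \<ge> 1" and "k \<ge> 1"
    and "cmeans_constraint n k F"
    and "\<omega> = (1 / real n) * (\<Sum>i=1..n. Min ((\<lambda>x. (norm (P i - x))\<^sup>2) ` (c ` {1..k})))"
    and "\<And>i. i \<in> {1..n} \<Longrightarrow> Pt i \<in> c ` {1..k} \<and>
           (\<forall>x\<in>c ` {1..k}. norm (P i - Pt i) \<le> norm (P i - x))"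
  shows "opt_cmeans n k F Pt \<le> 2 * \<omega> + 2 * opt_cmeans n k F P \<and>
         opt_cmeans_in n k F P (c ` {1..k}) \<le> 2 * \<omega> + 8 * opt_cmeans n k F Pt"
proof -
  note A = assms(5)
  have Fne: "F \<noteq> {}" and Fp: "\<And>S. S \<in> F \<Longrightarrow> ordered_partition n k S"
    using assms(3) unfolding cmeans_constraint_def by auto
  have inS: "\<And>S i j. S \<in> F \<Longrightarrow> j \<in> {1..k} \<Longrightarrow> i \<in> S j \<Longrightarrow> i \<in> {1..n}"
    using Fp unfolding ordered_partition_def by blast
  have Mi: "Min ((\<lambda>x. (norm (P i - x))\<^sup>2) ` (c ` {1..k})) = (norm (P i - Pt i))\<^sup>2"
    if "i \<in> {1..n}" for i
  proof (rule Min_eqI)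
    show "finite ((\<lambda>x. (norm (P i - x))\<^sup>2) ` (c ` {1..k}))" by simp
    show "(norm (P i - Pt i))\<^sup>2 \<in> (\<lambda>x. (norm (P i - x))\<^sup>2) ` (c ` {1..k})"
      using A[OF that] by blast
    fix y assume "y \<in> (\<lambda>x. (norm (P i - x))\<^sup>2) ` (c ` {1..k})"
    then obtain x where x: "x \<in> c ` {1..k}" "y = (norm (P i - x))\<^sup>2" by blast
    have "norm (P i - Pt i) \<le> norm (P i - x)" using A[OF that] x(1) by blast
    then show "(norm (P i - Pt i))\<^sup>2 \<le> y" using x(2) by (simp add: power_mono)
  qed
  have om: "\<omega> = (1 / real n) * (\<Sum>i=1..n. (norm (P i - Pt i))\<^sup>2)"
    using assms(4) Mi by simp
  have npos: "real n > 0" using assms(1) by simp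
  have cost_nn: "cmeans_cost n k X S d \<ge> 0" for X :: "nat \<Rightarrow> 'a" and S d
    unfolding cmeans_cost_def by (intro mult_nonneg_nonneg sum_nonneg) auto
  have omS: "\<omega> = (1 / real n) * (\<Sum>j=1..k. \<Sum>i\<in>S j. (norm (P i - Pt i))\<^sup>2)" if "S \<in> F" for S
    using om part_sum[OF Fp[OF that]] by simp
  have p1: "cmeans_cost n k Pt S d \<le> 2 * \<omega> + 2 * cmeans_cost n k P S d" if S: "S \<in> F" for S d
  proof -
    have "(\<Sum>j=1..k. \<Sum>i\<in>S j. (norm (Pt i - d j))\<^sup>2) \<le>
          (\<Sum>j=1..k. \<Sum>i\<in>S j. 2 * (norm (P i - Pt i))\<^sup>2 + 2 * (norm (P i - d j))\<^sup>2)"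
    proof (intro sum_mono)
      fix j i
      have "norm (Pt i - d j)^2 \<le> 2 * norm (Pt i - P i)^2 + 2 * norm (P i - d j)^2" by (rule sq_tri)
      then show "(norm (Pt i - d j))\<^sup>2 \<le> 2 * (norm (P i - Pt i))\<^sup>2 + 2 * (norm (P i - d j))\<^sup>2"
        by (simp add: norm_minus_commute)
    qed
    also have "\<dots> = 2 * (\<Sum>j=1..k. \<Sum>i\<in>S j. (norm (P i - Pt i))\<^sup>2) + 2 * (\<Sum>j=1..k. \<Sum>i\<in>S j. (norm (P i - d j))\<^sup>2)"
      by (simp add: sum.distrib sum_distrib_left)
    finally show ?thesis unfolding cmeans_cost_def omS[OF S] using npos
      by (simp add: field_simps divide_right_mono)
  qed
  have exq: "\<exists>l. l \<in> {1..k} \<and> (\<forall>l'\<in>{1..k}. norm (x - c l) \<le> norm (x - c l'))" for x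
  proof -
    have fin: "finite ((\<lambda>l. norm (x - c l)) ` {1..k})" "(\<lambda>l. norm (x - c l)) ` {1..k} \<noteq> {}"
      using assms(2) by auto
    from Min_in[OF fin] obtain l where "l \<in> {1..k}" "Min ((\<lambda>l. norm (x - c l)) ` {1..k}) = norm (x - c l)"
      by auto
    then show ?thesis using fin(1) by (metis Min_le image_eqI)
  qed
  have p2: "opt_cmeans_in n k F P (c ` {1..k}) \<le> 2 * \<omega> + 8 * cmeans_cost n k Pt S d" if S: "S \<in> F" for S d
  proof -
    define q where "q j = c (SOME l. l \<in> {1..k} \<and> (\<forall>l'\<in>{1..k}. norm (d j - c l) \<le> norm (d j - c l')))" for j
    have qC: "q j \<in> c ` {1..k}" and qmin: "\<forall>l'\<in>{1..k}. norm (d j - q j) \<le> norm (d j - c l')" for j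
      using someI_ex[OF exq[of "d j"]] unfolding q_def by auto
    have qin: "q \<in> {q. \<forall>j\<in>{1..k}. q j \<in> c ` {1..k}}" using qC by blast
    have "opt_cmeans_in n k F P (c ` {1..k}) \<le> (INF q\<in>{q. \<forall>j\<in>{1..k}. q j \<in> c ` {1..k}}. cmeans_cost n k P S q)"
      unfolding opt_cmeans_in_def
      by (rule cINF_lower[OF _ S], rule bdd_belowI[where m=0], auto intro!: cINF_greatest simp: cost_nn qC)
    also have "\<dots> \<le> cmeans_cost n k P S q"
      by (rule cINF_lower[OF _ qin]) (auto intro!: bdd_belowI[where m=0] simp: cost_nn)
    also have "\<dots> \<le> 2 * \<omega> + 8 * cmeans_cost n k Pt S d"
    proof -
      have "(\<Sum>j=1..k. \<Sum>i\<in>S j. (norm (P i - q j))\<^sup>2) \<le>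
            (\<Sum>j=1..k. \<Sum>i\<in>S j. 2 * (norm (P i - Pt i))\<^sup>2 + 8 * (norm (Pt i - d j))\<^sup>2)"
      proof (intro sum_mono)
        fix j i assume j: "j \<in> {1..k}" and i: "i \<in> S j"
        have "i \<in> {1..n}" using inS[OF S j i] .
        then obtain l where "l \<in> {1..k}" "Pt i = c l" using A by blast
        then have "norm (d j - q j) \<le> norm (d j - Pt i)" using qmin by simp
        then show "(norm (P i - q j))\<^sup>2 \<le> 2 * (norm (P i - Pt i))\<^sup>2 + 8 * (norm (Pt i - d j))\<^sup>2"
          by (rule sq_tri2)
      qed
      also have "\<dots> = 2 * (\<Sum>j=1..k. \<Sum>i\<in>S j. (norm (P i - Pt i))\<^sup>2) + 8 * (\<Sum>j=1..k. \<Sum>i\<in>S j. (norm (Pt i - d j))\<^sup>2)"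
        by (simp add: sum.distrib sum_distrib_left)
      finally show ?thesis unfolding cmeans_cost_def omS[OF S] using npos
        by (simp add: field_simps divide_right_mono)
    qed
    finally show ?thesis .
  qed
  have r1: "opt_cmeans n k F Pt \<le> 2 * \<omega> + 2 * opt_cmeans n k F P"
  proof -
    have "(opt_cmeans n k F Pt - 2 * \<omega>) / 2 \<le> opt_cmeans n k F P"
      unfolding opt_cmeans_def
    proof (intro cINF_greatest[OF Fne] cINF_greatest)
      fix S d assume S: "S \<in> F"
      have "(INF S\<in>F. INF c. cmeans_cost n k Pt S c) \<le> (INF c. cmeans_cost n k Pt S c)"
        by (rule cINF_lower[OF _ S], rule bdd_belowI[where m=0], auto intro!: cINF_greatest simp: cost_nn)
      also have "\<dots> \<le> cmeans_cost n k Pt S d"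
        by (rule cINF_lower) (auto intro!: bdd_belowI[where m=0] simp: cost_nn)
      finally show "((INF S\<in>F. INF c. cmeans_cost n k Pt S c) - 2 * \<omega>) / 2 \<le> cmeans_cost n k P S d"
        using p1[OF S, of d] by simp
    qed simp
    then show ?thesis by simp
  qed
  have r2: "opt_cmeans_in n k F P (c ` {1..k}) \<le> 2 * \<omega> + 8 * opt_cmeans n k F Pt"
  proof -
    have "(opt_cmeans_in n k F P (c ` {1..k}) - 2 * \<omega>) / 8 \<le> opt_cmeans n k F Pt"
      unfolding opt_cmeans_def
    proof (intro cINF_greatest[OF Fne] cINF_greatest)
      fix S d assume S: "S \<in> F"
      show "(opt_cmeans_in n k F P (c ` {1..k}) - 2 * \<omega>) / 8 \<le> cmeans_cost n k Pt S d"
        using p2[OF S, of d] by simp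
    qed simp
    then show ?thesis by simp
  qed
  show ?thesis using r1 r2 by simp
qed

end
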